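(* Let $p$ be a polynomial with real coefficients having $m$ distinct simple roots $\alpha_1,\dots,\alpha_m$, all negative real numbers, and let $q$ be a polynomial with real coefficients such that $\deg(q)<\deg(p)$ and $q,p$ have no common zero. If the divided differences satisfy $q[\alpha_1,\alpha_2,\dots,\alpha_j]\ge 0$ for $j=1,2,\dots,m$, then $(q(n)/p(n))_{n\in\mathbb Z_+}$ is a Hausdorff moment sequence.
   Context: For distinct reals $x_1,\dots,x_j$, $q[x_1,\dots,x_j]=\sum_{i=1}^j q(x_i)/\prod_{k\ne i}(x_i-x_k)$. A sequence $(x_n)_{n\in\mathbb Z_+}$ of positive numbers is a Hausdorff moment sequence if there is a positive Radon measure $\mu$ on $[0,1]$ with $x_n=\int_0^1 t^n\,d\mu(t)$ for all $n\in\mathbb Z_+$. *)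

theory Defs
  imports "HOL-Analysis.Analysis" "HOL-Computational_Algebra.Polynomial"
begin

text \<open>Divided difference q[x_0,...,x_{j-1}] of a polynomial q at the first j
  points of the sequence x (0-indexed), as in the paper.\<close>
definition divdiff :: "real poly \<Rightarrow> (nat \<Rightarrow> real) \<Rightarrow> nat \<Rightarrow> real" where
  "divdiff q x j = (\<Sum>i<j. poly q (x i) / (\<Prod>k\<in>{..<j} - {i}. (x i - x k)))"

definition hausdorff_moment_seq :: "(nat \<Rightarrow> real) \<Rightarrow> bool" where
  "hausdorff_moment_seq s \<longleftrightarrow> (\<forall>n. s n > 0) \<and>
     (\<exists>M :: real measure. sets M = sets borel \<and> finite_measure M \<and>
        emeasure M (- {0..1}) = 0 \<and>
        (\<forall>n. integrable M (\<lambda>t. t ^ n) \<and> s n = (\<integral>t. t ^ n \<partial>M)))"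

end

theory Submission
  imports Defs
begin

lemma powr_moment:
  fixes c :: real assumes c: "c > -1"
  shows "integrable lborel (\<lambda>t. indicator {0<..1} t * t powr c)"
    and "integral\<^sup>L lborel (\<lambda>t. indicator {0<..1} t * t powr c) = 1/(c+1)"
proof -
  have h0: "((\<lambda>x. x powr c) has_integral (1 powr (c+1) / (c+1))) {0..1}"
    by (rule has_integral_powr_from_0) (use c in auto)
  have "((\<lambda>x. x powr c) has_integral (1/(c+1))) {0<..1}"
  proof -
    have "((\<lambda>x. x powr c) has_integral (1/(c+1))) {0..1}" using h0 by simp
    moreover have "{0..1::real} - {0<..1} = {0}" "{0<..1::real} - {0..1} = {}" by auto
    ultimately show ?thesis
      by (subst has_integral_spike_set_eq[where S="{0<..1}" and T="{0..1}"]) (auto intro: negligible_subset[of "{0}"])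
  qed
  then have nn: "integral\<^sup>N lborel (\<lambda>x. indicator {0<..1} x * x powr c) = 1/(c+1)"
    by (intro nn_integral_has_integral_lebesgue) auto
  have meas: "(\<lambda>t. indicator {0<..1} t * t powr c) \<in> borel_measurable lborel"
    by measurable
  have nonneg: "\<And>t. 0 \<le> indicator {0<..1} t * t powr (c::real)" by auto
  show "integrable lborel (\<lambda>t. indicator {0<..1} t * t powr c)"
    by (rule integrableI_nonneg[OF meas]) (use nn nonneg in auto)
  show "integral\<^sup>L lborel (\<lambda>t. indicator {0<..1} t * t powr c) = 1/(c+1)"
    using nn c by (subst integral_eq_nn_integral[OF meas]) (auto simp: nonneg)
qed

lemma lagrange_interp:
  fixes q :: "real poly" and \<alpha> :: "nat \<Rightarrow> real"
  assumes inj: "inj_on \<alpha> {..<m}" and deg: "degree q < m"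
  shows "poly q x = (\<Sum>i<m. poly q (\<alpha> i) / (\<Prod>k\<in>{..<m}-{i}. (\<alpha> i - \<alpha> k))
                         * (\<Prod>k\<in>{..<m}-{i}. (x - \<alpha> k)))"
proof -
  define L where "L = (\<Sum>i<m. smult (poly q (\<alpha> i) / (\<Prod>k\<in>{..<m}-{i}. (\<alpha> i - \<alpha> k)))
                                 (\<Prod>k\<in>{..<m}-{i}. [:- \<alpha> k, 1:]))"
  have polyL: "poly L y = (\<Sum>i<m. poly q (\<alpha> i) / (\<Prod>k\<in>{..<m}-{i}. (\<alpha> i - \<alpha> k))
                         * (\<Prod>k\<in>{..<m}-{i}. (y - \<alpha> k)))" for y
    by (simp add: L_def poly_sum poly_prod)
  have m1: "m \<ge> 1" using deg by simp
  have degL: "degree L \<le> m - 1"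
    unfolding L_def
  proof (rule degree_sum_le)
    fix i assume i: "i \<in> {..<m}"
    have "degree (\<Prod>k\<in>{..<m}-{i}. [:- \<alpha> k, 1:]) \<le> (\<Sum>k\<in>{..<m}-{i}. degree [:- \<alpha> k, 1:])"
      using degree_prod_sum_le[of "{..<m}-{i}" "\<lambda>k. [:- \<alpha> k, 1:]"] by (simp add: o_def)
    also have "\<dots> = m - 1" using i by simp
    finally show "degree (smult (poly q (\<alpha> i) / (\<Prod>k\<in>{..<m}-{i}. (\<alpha> i - \<alpha> k)))
                                 (\<Prod>k\<in>{..<m}-{i}. [:- \<alpha> k, 1:])) \<le> m - 1"
      using degree_smult_le order_trans by blast
  qed simp
  have rootsR: "poly (q - L) (\<alpha> j) = 0" if j: "j < m" for j
  proof -
    have Dj: "(\<Prod>k\<in>{..<m}-{j}. (\<alpha> j - \<alpha> k)) \<noteq> 0"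
      using inj j by (auto simp: inj_on_def)
    have "poly L (\<alpha> j) = poly q (\<alpha> j) / (\<Prod>k\<in>{..<m}-{j}. (\<alpha> j - \<alpha> k))
                         * (\<Prod>k\<in>{..<m}-{j}. (\<alpha> j - \<alpha> k))
        + (\<Sum>i\<in>{..<m}-{j}. poly q (\<alpha> i) / (\<Prod>k\<in>{..<m}-{i}. (\<alpha> i - \<alpha> k))
                         * (\<Prod>k\<in>{..<m}-{i}. (\<alpha> j - \<alpha> k)))"
      unfolding polyL using j by (subst sum.remove[of _ j]) auto
    also have "(\<Sum>i\<in>{..<m}-{j}. poly q (\<alpha> i) / (\<Prod>k\<in>{..<m}-{i}. (\<alpha> i - \<alpha> k))
                         * (\<Prod>k\<in>{..<m}-{i}. (\<alpha> j - \<alpha> k))) = 0"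
      using j by (intro sum.neutral ballI) auto
    finally show ?thesis using Dj by simp
  qed
  have "q - L = 0"
  proof (rule ccontr)
    assume nz: "q - L \<noteq> 0"
    have "degree (q - L) < m"
      using degL deg m1 degree_diff_le[of q "m-1" L] by linarith
    moreover have "card (\<alpha> ` {..<m}) \<le> card {x. poly (q - L) x = 0}"
      using rootsR poly_roots_finite[OF nz] by (intro card_mono) auto
    moreover have "card (\<alpha> ` {..<m}) = m" using card_image[OF inj] by simp
    ultimately show False using card_poly_roots_bound[OF nz] by linarith
  qed
  then have "poly q x = poly L x" by (metis eq_iff_diff_eq_0)
  then show ?thesis using polyL by simp
qed

lemma H_nonneg:
  fixes q :: "real poly" and \<alpha> :: "nat \<Rightarrow> real"
  assumes inj: "inj_on \<alpha> {..<m}"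
    and dd: "\<And>j. 1 \<le> j \<Longrightarrow> j \<le> m \<Longrightarrow> divdiff q \<alpha> j \<ge> 0"
  shows "j \<le> m \<Longrightarrow> 0 < t \<Longrightarrow> t \<le> 1 \<Longrightarrow>
     0 \<le> (\<Sum>i<j. poly q (\<alpha> i) * t powr (- \<alpha> i) / (\<Prod>k\<in>{..<j}-{i}. (\<alpha> i - \<alpha> k)))"
proof (induction j arbitrary: t)
  case 0
  then show ?case by simp
next
  case (Suc l)
  have lm: "l < m" using Suc.prems by simp
  define D where "D i = (\<Prod>k\<in>{..<Suc l}-{i}. (\<alpha> i - \<alpha> k))" for i
  define F where "F u = (\<Sum>i<Suc l. poly q (\<alpha> i) * u powr (\<alpha> l - \<alpha> i) / D i)" for u
  define F' where "F' u = (\<Sum>i<Suc l. poly q (\<alpha> i) * ((\<alpha> l - \<alpha> i) * u powr (\<alpha> l - \<alpha> i - 1)) / D i)" for u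
  have dF: "(F has_real_derivative F' u) (at u)" if u: "u > 0" for u
    unfolding F_def F'_def
    by (intro DERIV_sum DERIV_cdivide DERIV_cmult has_real_derivative_powr u)
  have F'eq: "F' u = - (u powr (\<alpha> l - 1) *
      (\<Sum>i<l. poly q (\<alpha> i) * u powr (- \<alpha> i) / (\<Prod>k\<in>{..<l}-{i}. (\<alpha> i - \<alpha> k))))"
    if u: "u > 0" for u
  proof -
    have "F' u = (\<Sum>i<l. poly q (\<alpha> i) * ((\<alpha> l - \<alpha> i) * u powr (\<alpha> l - \<alpha> i - 1)) / D i)"
      unfolding F'_def by simp
    also have "\<dots> = (\<Sum>i<l. - (u powr (\<alpha> l - 1) *
        (poly q (\<alpha> i) * u powr (- \<alpha> i) / (\<Prod>k\<in>{..<l}-{i}. (\<alpha> i - \<alpha> k)))))"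
    proof (rule sum.cong[OF refl])
      fix i assume i: "i \<in> {..<l}"
      have ne: "\<alpha> i \<noteq> \<alpha> l" using inj i lm by (auto simp: inj_on_def)
      have set: "{..<Suc l}-{i} = insert l ({..<l}-{i})" using i by auto
      have Di: "D i = (\<alpha> i - \<alpha> l) * (\<Prod>k\<in>{..<l}-{i}. (\<alpha> i - \<alpha> k))"
        unfolding D_def set by (subst prod.insert) auto
      have pw: "u powr (\<alpha> l - \<alpha> i - 1) = u powr (\<alpha> l - 1) * u powr (- \<alpha> i)"
        using u by (simp add: powr_add[symmetric] algebra_simps)
      show "poly q (\<alpha> i) * ((\<alpha> l - \<alpha> i) * u powr (\<alpha> l - \<alpha> i - 1)) / D i =
         - (u powr (\<alpha> l - 1) * (poly q (\<alpha> i) * u powr (- \<alpha> i) / (\<Prod>k\<in>{..<l}-{i}. (\<alpha> i - \<alpha> k))))"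
      proof -
        have gen: "c * ((a - b) * (x * y)) / ((b - a) * P) = - (x * (c * y / P))"
          if "a \<noteq> b" for a b c x y P :: real
          using that by (cases "P = 0") (auto simp: field_simps)
        show ?thesis
          unfolding Di pw by (rule gen[OF ne[symmetric]])
      qed
    qed
    also have "\<dots> = - (u powr (\<alpha> l - 1) *
      (\<Sum>i<l. poly q (\<alpha> i) * u powr (- \<alpha> i) / (\<Prod>k\<in>{..<l}-{i}. (\<alpha> i - \<alpha> k))))"
      by (simp add: sum_negf sum_distrib_left)
    finally show ?thesis .
  qed
  have Fmono: "F 1 \<le> F t"
  proof (rule DERIV_nonpos_imp_nonincreasing[of t 1 F])
    show "t \<le> 1" using Suc.prems by simp
    fix x assume x: "t \<le> x" "x \<le> 1"
    then have x0: "x > 0" using Suc.prems by simp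
    have "0 \<le> (\<Sum>i<l. poly q (\<alpha> i) * x powr (- \<alpha> i) / (\<Prod>k\<in>{..<l}-{i}. (\<alpha> i - \<alpha> k)))"
      using Suc.IH[of x] lm x x0 by simp
    then have "F' x \<le> 0" unfolding F'eq[OF x0] by simp
    then show "\<exists>y. DERIV F x :> y \<and> y \<le> 0" using dF[OF x0] by blast
  qed
  have F1: "F 1 = divdiff q \<alpha> (Suc l)"
    unfolding F_def divdiff_def D_def by simp
  have "F 1 \<ge> 0" using F1 dd[of "Suc l"] lm by simp
  then have Ft: "F t \<ge> 0" using Fmono by simp
  have "(\<Sum>i<Suc l. poly q (\<alpha> i) * t powr (- \<alpha> i) / (\<Prod>k\<in>{..<Suc l}-{i}. (\<alpha> i - \<alpha> k)))
      = t powr (- \<alpha> l) * F t"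
    unfolding F_def D_def sum_distrib_left
  proof (rule sum.cong[OF refl])
    fix i
    have "t powr (- \<alpha> i) = t powr (- \<alpha> l) * t powr (\<alpha> l - \<alpha> i)"
      using Suc.prems by (simp add: powr_add[symmetric])
    then show "poly q (\<alpha> i) * t powr (- \<alpha> i) / (\<Prod>k\<in>{..<Suc l}-{i}. (\<alpha> i - \<alpha> k)) =
      t powr (- \<alpha> l) * (poly q (\<alpha> i) * t powr (\<alpha> l - \<alpha> i) / (\<Prod>k\<in>{..<Suc l}-{i}. (\<alpha> i - \<alpha> k)))"
      by simp
  qed
  then show ?case using Ft by simp
qed


theorem mainTheorem3:
  fixes p q :: "real poly" and \<alpha> :: "nat \<Rightarrow> real" and m :: nat
  assumes p_def: "p = (\<Prod>i<m. [:- \<alpha> i, 1:])"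
    and distinct: "inj_on \<alpha> {..<m}"
    and neg: "\<And>i. i < m \<Longrightarrow> \<alpha> i < 0"
    and deg: "degree q < degree p"
    and nocommon: "\<not> (\<exists>z. poly p z = 0 \<and> poly q z = 0)"
    and dd: "\<And>j. 1 \<le> j \<Longrightarrow> j \<le> m \<Longrightarrow> divdiff q \<alpha> j \<ge> 0"
  shows "hausdorff_moment_seq (\<lambda>n. poly q (real n) / poly p (real n))"
proof -
  have degp: "degree p \<le> m"
    using degree_prod_sum_le[of "{..<m}" "\<lambda>k. [:- \<alpha> k, 1:]"] unfolding p_def by (simp add: o_def)
  have degq: "degree q < m" using deg degp by simp
  then have m1: "m \<ge> 1" by simp
  have polyp: "poly p x = (\<Prod>k<m. x - \<alpha> k)" for x by (simp add: p_def poly_prod)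
  define D where "D i = (\<Prod>k\<in>{..<m}-{i}. (\<alpha> i - \<alpha> k))" for i
  define c where "c i = poly q (\<alpha> i) / D i" for i
  define h where "h t = (\<Sum>i<m. c i * t powr (- \<alpha> i - 1))" for t
  define g where "g t = indicator {0<..1} t * h t" for t :: real
  have hnn: "0 \<le> h t" if t: "0 < t" "t \<le> 1" for t
  proof -
    have "h t = t powr (-1) * (\<Sum>i<m. poly q (\<alpha> i) * t powr (- \<alpha> i) / (\<Prod>k\<in>{..<m}-{i}. (\<alpha> i - \<alpha> k)))"
      unfolding h_def sum_distrib_left
    proof (rule sum.cong[OF refl])
      fix i
      have "t powr (- \<alpha> i - 1) = t powr (-1) * t powr (- \<alpha> i)"
        using t by (simp add: powr_diff powr_minus divide_inverse)
      then show "c i * t powr (- \<alpha> i - 1) = t powr (-1) * (poly q (\<alpha> i) * t powr (- \<alpha> i) / (\<Prod>k\<in>{..<m}-{i}. (\<alpha> i - \<alpha> k)))"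
        by (simp add: c_def D_def)
    qed
    moreover have "0 \<le> (\<Sum>i<m. poly q (\<alpha> i) * t powr (- \<alpha> i) / (\<Prod>k\<in>{..<m}-{i}. (\<alpha> i - \<alpha> k)))"
      using H_nonneg[OF distinct dd] t by simp
    ultimately show ?thesis by simp
  qed
  have gnn: "0 \<le> g t" for t using hnn[of t] by (simp add: g_def indicator_def)
  have gmeas[measurable]: "g \<in> borel_measurable lborel"
    unfolding g_def h_def by measurable
  have ppos: "poly p (real n) > 0" for n
    unfolding polyp
  proof (intro prod_pos)
    fix i assume "i \<in> {..<m}"
    then have "\<alpha> i < 0" using neg by simp
    then show "0 < real n - \<alpha> i" by (simp add: add_pos_nonneg)
  qed
  have mom: "integrable lborel (\<lambda>t. g t * t ^ n) \<and>
     integral\<^sup>L lborel (\<lambda>t. g t * t ^ n) = poly q (real n) / poly p (real n)" for n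
  proof -
    have eq: "(\<lambda>t. g t * t ^ n) = (\<lambda>t. \<Sum>i<m. c i * (indicator {0<..1} t * t powr (real n - \<alpha> i - 1)))"
    proof
      fix t :: real
      show "g t * t ^ n = (\<Sum>i<m. c i * (indicator {0<..1} t * t powr (real n - \<alpha> i - 1)))"
      proof (cases "t \<in> {0<..1}")
        case True
        then have t0: "t > 0" by simp
        have "t powr (real n - \<alpha> i - 1) = t powr (- \<alpha> i - 1) * t ^ n" for i
          using t0 by (simp add: powr_add[symmetric] powr_realpow[symmetric] algebra_simps)
        then show ?thesis using True by (simp add: g_def h_def sum_distrib_left sum_distrib_right algebra_simps)
      next
        case False
        then show ?thesis by (simp add: g_def)
      qed
    qed
    have int: "integrable lborel (\<lambda>t. indicator {0<..1} t * t powr (real n - \<alpha> i - 1))"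
      and val: "integral\<^sup>L lborel (\<lambda>t. indicator {0<..1} t * t powr (real n - \<alpha> i - 1)) = 1 / (real n - \<alpha> i)"
      if i: "i < m" for i
      using powr_moment[of "real n - \<alpha> i - 1"] neg[OF i] by auto
    have I1: "integrable lborel (\<lambda>t. g t * t ^ n)"
      unfolding eq using int by (intro Bochner_Integration.integrable_sum integrable_mult_right) auto
    have "integral\<^sup>L lborel (\<lambda>t. g t * t ^ n) = (\<Sum>i<m. c i * (1 / (real n - \<alpha> i)))"
      unfolding eq using int val by (subst Bochner_Integration.integral_sum) auto
    also have "\<dots> = poly q (real n) / poly p (real n)"
    proof -
      have "poly q (real n) = (\<Sum>i<m. c i * (\<Prod>k\<in>{..<m}-{i}. (real n - \<alpha> k)))"
        using lagrange_interp[OF distinct degq, of "real n"] by (simp add: c_def D_def)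
      then have "poly q (real n) / poly p (real n) = (\<Sum>i<m. c i * (\<Prod>k\<in>{..<m}-{i}. (real n - \<alpha> k)) / poly p (real n))"
        by (simp add: sum_divide_distrib)
      also have "\<dots> = (\<Sum>i<m. c i * (1 / (real n - \<alpha> i)))"
      proof (rule sum.cong[OF refl])
        fix i assume i: "i \<in> {..<m}"
        have pn: "poly p (real n) = (real n - \<alpha> i) * (\<Prod>k\<in>{..<m}-{i}. (real n - \<alpha> k))"
          unfolding polyp using i by (subst prod.remove[of _ i]) auto
        have "(\<Prod>k\<in>{..<m}-{i}. (real n - \<alpha> k)) \<noteq> 0" using ppos[of n] pn by (metis less_irrefl mult_zero_right)
        moreover have "real n - \<alpha> i \<noteq> 0" using neg[of i] i by auto
        ultimately show "c i * (\<Prod>k\<in>{..<m}-{i}. (real n - \<alpha> k)) / poly p (real n) = c i * (1 / (real n - \<alpha> i))"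
          unfolding pn by (simp add: field_simps)
      qed
      finally show ?thesis by simp
    qed
    finally show ?thesis using I1 by simp
  qed
  define M where "M = density lborel (\<lambda>t. ennreal (g t))"
  have setsM: "sets M = sets borel" by (simp add: M_def)
  have intM: "integrable M (\<lambda>t. t ^ n)" for n
    unfolding M_def using mom[of n] by (subst integrable_density) (auto simp: gnn)
  have valM: "(\<integral>t. t ^ n \<partial>M) = poly q (real n) / poly p (real n)" for n
    unfolding M_def using mom[of n] by (subst integral_density) (auto simp: gnn)
  have g_int: "integrable lborel g" using mom[of 0] by simp
  have finM: "finite_measure M"
  proof (rule finite_measureI)
    have "emeasure M (space M) = (\<integral>\<^sup>+ x. ennreal (g x) * indicator UNIV x \<partial>lborel)"
      unfolding M_def by (subst emeasure_density) auto
    also have "\<dots> = (\<integral>\<^sup>+ x. ennreal (g x) \<partial>lborel)" by simp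
    also have "\<dots> = ennreal (integral\<^sup>L lborel g)"
      using g_int gnn by (intro nn_integral_eq_integral) auto
    finally show "emeasure M (space M) \<noteq> \<infinity>" by simp
  qed
  have outM: "emeasure M (- {0..1}) = 0"
  proof -
    have "emeasure M (- {0..1}) = (\<integral>\<^sup>+ x. ennreal (g x) * indicator (- {0..1}) x \<partial>lborel)"
      unfolding M_def by (subst emeasure_density) auto
    also have "(\<lambda>x. ennreal (g x) * indicator (- {0..1}) x) = (\<lambda>x. 0)"
      by (auto simp: fun_eq_iff g_def indicator_def)
    finally show ?thesis by simp
  qed
  have Gnn: "0 \<le> g t * t ^ k" for t :: real and k
  proof (cases "t \<in> {0<..1}")
    case True then show ?thesis using gnn[of t] by simp
  next
    case False then show ?thesis by (simp add: g_def)
  qed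
  have Snn: "0 \<le> poly q (real k) / poly p (real k)" for k
  proof -
    have "0 \<le> integral\<^sup>L lborel (\<lambda>t. g t * t ^ k)" by (rule Bochner_Integration.integral_nonneg) (rule Gnn)
    then show ?thesis using mom[of k] by simp
  qed
  have pos: "poly q (real n) / poly p (real n) > 0" for n
  proof (rule ccontr)
    assume "\<not> ?thesis"
    then have S0: "poly q (real n) / poly p (real n) = 0" using Snn[of n] by linarith
    have qk: "poly q (real k) = 0" if k: "k \<ge> n" for k
    proof -
      have "integral\<^sup>L lborel (\<lambda>t. g t * t ^ k) \<le> integral\<^sup>L lborel (\<lambda>t. g t * t ^ n)"
      proof (rule Bochner_Integration.integral_mono)
        show "integrable lborel (\<lambda>t. g t * t ^ k)" using mom by blast
        show "integrable lborel (\<lambda>t. g t * t ^ n)" using mom by blast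
        fix t :: real
        show "g t * t ^ k \<le> g t * t ^ n"
        proof (cases "t \<in> {0<..1}")
          case True
          then have "t ^ k \<le> t ^ n" using k by (intro power_decreasing) auto
          then show ?thesis using gnn[of t] by (intro mult_left_mono) auto
        next
          case False then show ?thesis by (simp add: g_def)
        qed
      qed
      then have "poly q (real k) / poly p (real k) \<le> 0" using mom[of k] mom[of n] S0 by simp
      then have "poly q (real k) / poly p (real k) = 0" using Snn[of k] by linarith
      then show ?thesis using ppos[of k] by simp
    qed
    have "q = 0"
    proof (rule ccontr)
      assume nz: "q \<noteq> 0"
      have "real ` {n..} \<subseteq> {x. poly q x = 0}" using qk by auto
      moreover have "infinite (real ` {n..})"
        using finite_imageD[of real "{n..}"] infinite_Ici[of n] by (auto simp: inj_on_def)
      ultimately show False using poly_roots_finite[OF nz] finite_subset by blast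
    qed
    moreover have "poly p (\<alpha> 0) = 0" unfolding polyp using m1 by (auto intro!: bexI[of _ 0])
    ultimately show False using nocommon by auto
  qed
  show ?thesis
    unfolding hausdorff_moment_seq_def
    using pos setsM finM outM intM valM by (intro conjI allI exI[of _ M]) auto
qed

end
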